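(* Let $q$ be a query with sensitivity $\Delta q>0$ and let $b>0$ be a random scale parameter with $M_{1/b}(t)=\mathbb E[e^{t/b}]$. Consider the R$^2$DP Laplace mechanism $\mathcal M_q(d,b)=q(d)+\mathrm{Lap}(b)$. For every $\epsilon\ge \ln\big[\mathbb E_{1/b}(e^{\epsilon(b)})\big]=\ln M_{1/b}(\Delta q)$, where $\epsilon(b)=\Delta q/b$, and every $\gamma\ge0$, the usefulness of the R$^2$DP mechanism is at most that of the $\epsilon$-differentially private Laplace mechanism with scale $\Delta q/\epsilon$: $$\mathbb P(|\mathcal M_q(d,b)-q(d)|\le\gamma)=1-M_{1/b}(-\gamma)\ \le\ 1-e^{-\gamma\epsilon/\Delta q}.$$ Equivalently, for an R$^2$DP mechanism to improve on the usefulness of the baseline Laplace mechanism with the same privacy level, it is necessary that $$e^{\epsilon}=\frac{\mathbb E(1/b)}{M'_{1/b}(-\Delta q)}<M_{1/b}(\Delta q).$$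
   Context: $\mathrm{Lap}(b)$ is the zero-mean Laplace distribution with density $\frac{1}{2b}e^{-|x|/b}$. In an R$^2$DP Laplace mechanism the scale $b$ is random (independent of the data) and, conditionally on $b$, $\mathrm{Lap}(b)$ noise is added to $q(d)$. $\Delta q=\max|q(d)-q(d')|$ over datasets differing in one individual's data. The baseline Laplace mechanism with scale $\Delta q/\epsilon$ is $\epsilon$-differentially private and has usefulness $1-e^{-\gamma\epsilon/\Delta q}$ at error bound $\gamma$. The quantity $\mathbb E(1/b)/M'_{1/b}(-\Delta q)$ is $e^\epsilon$ for the differential-privacy level $\epsilon$ guaranteed for the R$^2$DP Laplace mechanism, where $M'_{1/b}(t)=\mathbb E[\frac1b e^{t/b}]$. *)

theory Defs
  imports "HOL-Probability.Probability"
begin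

definition laplace_density :: "real \<Rightarrow> real \<Rightarrow> real \<Rightarrow> real" where
  "laplace_density c s x = exp (- \<bar>x - c\<bar> / s) / (2 * s)"

definition laplace :: "real \<Rightarrow> real \<Rightarrow> real measure" where
  "laplace c s = density lborel (\<lambda>x. ennreal (laplace_density c s x))"

text \<open>R2DP Laplace mechanism output distribution for query value c = q(d):
  the scale is the random variable b on the probability space M, independent of the data,
  and conditionally on b, Lap(b) noise is added to c.\<close>
definition r2dp_laplace :: "'a measure \<Rightarrow> ('a \<Rightarrow> real) \<Rightarrow> real \<Rightarrow> real measure" where
  "r2dp_laplace M b c = M \<bind> (\<lambda>\<omega>. laplace c (b \<omega>))"

definition mgf_inv :: "'a measure \<Rightarrow> ('a \<Rightarrow> real) \<Rightarrow> real \<Rightarrow> real" where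
  "mgf_inv M b t = (\<integral>\<omega>. exp (t / b \<omega>) \<partial>M)"

definition mgf_inv' :: "'a measure \<Rightarrow> ('a \<Rightarrow> real) \<Rightarrow> real \<Rightarrow> real" where
  "mgf_inv' M b t = (\<integral>\<omega>. (1 / b \<omega>) * exp (t / b \<omega>) \<partial>M)"

end

theory Submission
  imports Defs
begin

lemma lap_meas_interval:
  assumes s: "s > 0" and g: "\<gamma> \<ge> 0"
  shows "emeasure (laplace c s) {c - \<gamma>..c + \<gamma>} = ennreal (1 - exp (- \<gamma> / s))"
proof -
  have m: "(\<lambda>x. ennreal (laplace_density c s x)) \<in> borel_measurable lborel"
    unfolding laplace_density_def by measurable
  have i1: "(laplace_density c s has_integral ((-exp (-((c+\<gamma>)-c)/s)/2) - (-exp (-(c-c)/s)/2))) {c..c+\<gamma>}"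
  proof (rule fundamental_theorem_of_calculus)
    fix x assume x: "x \<in> {c..c+\<gamma>}"
    have "((\<lambda>x. -exp (-(x-c)/s)/2) has_real_derivative (exp (-(x-c)/s)/(2 * s))) (at x within {c..c+\<gamma>})"
      using s by (auto intro!: derivative_eq_intros simp: field_simps)
    moreover have "exp (-(x-c)/s)/(2 * s) = laplace_density c s x"
      using x by (simp add: laplace_density_def)
    ultimately show "((\<lambda>x. -exp (-(x-c)/s)/2) has_vector_derivative laplace_density c s x) (at x within {c..c+\<gamma>})"
      by (simp add: has_real_derivative_iff_has_vector_derivative)
  qed (use g in auto)
  have i2: "(laplace_density c s has_integral ((exp ((c-c)/s)/2) - (exp (((c-\<gamma>)-c)/s)/2))) {c-\<gamma>..c}"
  proof (rule fundamental_theorem_of_calculus)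
    fix x assume x: "x \<in> {c-\<gamma>..c}"
    have "((\<lambda>x. exp ((x-c)/s)/2) has_real_derivative (exp ((x-c)/s)/(2 * s))) (at x within {c-\<gamma>..c})"
      using s by (auto intro!: derivative_eq_intros simp: field_simps)
    moreover have "exp ((x-c)/s)/(2 * s) = laplace_density c s x"
      using x by (simp add: laplace_density_def)
    ultimately show "((\<lambda>x. exp ((x-c)/s)/2) has_vector_derivative laplace_density c s x) (at x within {c-\<gamma>..c})"
      by (simp add: has_real_derivative_iff_has_vector_derivative)
  qed (use g in auto)
  have i: "(laplace_density c s has_integral (1 - exp (- \<gamma> / s))) {c-\<gamma>..c+\<gamma>}"
  proof -
    have "(laplace_density c s has_integral ((exp ((c-c)/s)/2) - (exp (((c-\<gamma>)-c)/s)/2)) + ((-exp (-((c+\<gamma>)-c)/s)/2) - (-exp (-(c-c)/s)/2))) {c-\<gamma>..c+\<gamma>}"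
      using has_integral_combine[OF _ _ i2 i1] g by simp
    moreover have "(exp ((c-c)/s)/2) - (exp (((c-\<gamma>)-c)/s)/2) + ((-exp (-((c+\<gamma>)-c)/s)/2) - (-exp (-(c-c)/s)/2)) = 1 - exp (- \<gamma> / s)"
      by simp
    ultimately show ?thesis by simp
  qed
  have "emeasure (laplace c s) {c - \<gamma>..c + \<gamma>} = (\<integral>\<^sup>+ x. ennreal (laplace_density c s x) * indicator {c - \<gamma>..c + \<gamma>} x \<partial>lborel)"
    unfolding laplace_def using m by (simp add: emeasure_density)
  also have "\<dots> = ennreal (1 - exp (- \<gamma> / s))"
    by (rule nn_integral_has_integral_lebesgue'[OF _ i]) (use s in \<open>simp add: laplace_density_def\<close>)
  finally show ?thesis .
qed

lemma laplace_sets [simp]: "sets (laplace c s) = sets lborel"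
  unfolding laplace_def by simp

lemma laplace_space [simp]: "space (laplace c s) = UNIV"
  unfolding laplace_def by simp

lemma laplace_subprob:
  assumes s: "s > 0"
  shows "subprob_space (laplace c s)"
proof (rule subprob_spaceI)
  define A where "A = (\<lambda>n::nat. {c - real n..c + real n})"
  have r: "range A \<subseteq> sets (laplace c s)" unfolding A_def by auto
  have inc: "incseq A" unfolding A_def incseq_def by auto
  have e1: "(SUP n. emeasure (laplace c s) (A n)) = emeasure (laplace c s) (\<Union>i. A i)"
    by (rule SUP_emeasure_incseq[OF r inc])
  have un: "(\<Union>i. A i) = UNIV"
  proof (rule set_eqI)
    fix x :: real
    obtain n :: nat where "\<bar>x - c\<bar> \<le> real n" using real_arch_simple by blast
    then have "x \<in> A n" unfolding A_def by auto
    then show "x \<in> (\<Union>i. A i) \<longleftrightarrow> x \<in> UNIV" by blast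
  qed
  have le: "emeasure (laplace c s) (A n) \<le> 1" for n
  proof -
    have "emeasure (laplace c s) (A n) = ennreal (1 - exp (- real n / s))"
      unfolding A_def by (rule lap_meas_interval[OF s]) simp
    also have "\<dots> \<le> 1" by (simp add: ennreal_le_1)
    finally show ?thesis .
  qed
  have "emeasure (laplace c s) UNIV \<le> 1"
    using e1 un le by (metis SUP_least)
  then show "emeasure (laplace c s) (space (laplace c s)) \<le> 1" by simp
qed simp

lemma laplace_kernel:
  fixes b :: "'a \<Rightarrow> real"
  assumes "b \<in> borel_measurable M" "\<forall>\<omega>\<in>space M. b \<omega> > 0"
  shows "(\<lambda>\<omega>. laplace c (b \<omega>)) \<in> measurable M (subprob_algebra lborel)"
proof (rule measurable_subprob_algebra)
  fix A :: "real set" assume A: "A \<in> sets lborel"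
  have m: "(\<lambda>x. ennreal (laplace_density c s x)) \<in> borel_measurable lborel" for s
    unfolding laplace_density_def by measurable
  have "(\<lambda>\<omega>. \<integral>\<^sup>+ x. ennreal (laplace_density c (b \<omega>) x) * indicator A x \<partial>lborel) \<in> borel_measurable M"
  proof (rule lborel.borel_measurable_nn_integral)
    have [measurable]: "b \<in> borel_measurable M" "A \<in> sets lborel" using assms(1) A by auto
    show "(\<lambda>(\<omega>,x). ennreal (laplace_density c (b \<omega>) x) * indicator A x) \<in> borel_measurable (M \<Otimes>\<^sub>M lborel)"
      unfolding laplace_density_def by measurable
  qed
  moreover have "emeasure (laplace c (b \<omega>)) A = (\<integral>\<^sup>+ x. ennreal (laplace_density c (b \<omega>) x) * indicator A x \<partial>lborel)" for \<omega>
    unfolding laplace_def using m A by (simp add: emeasure_density)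
  ultimately show "(\<lambda>\<omega>. emeasure (laplace c (b \<omega>)) A) \<in> borel_measurable M" by simp
next
  fix a assume "a \<in> space M"
  then show "subprob_space (laplace c (b a))" using assms(2) laplace_subprob by blast
qed simp

lemma exp_jensen:
  fixes X :: "'a \<Rightarrow> real"
  assumes P: "prob_space M" and iX: "integrable M X" and iE: "integrable M (\<lambda>\<omega>. exp (X \<omega>))"
  shows "exp (\<integral>\<omega>. X \<omega> \<partial>M) \<le> (\<integral>\<omega>. exp (X \<omega>) \<partial>M)"
proof -
  interpret prob_space M by (rule P)
  define m where "m = (\<integral>\<omega>. X \<omega> \<partial>M)"
  have pw: "exp m + exp m * (X \<omega> - m) \<le> exp (X \<omega>)" for \<omega>
  proof -
    have "1 + (X \<omega> - m) \<le> exp (X \<omega> - m)" by (rule exp_ge_add_one_self)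
    then have "exp m * (1 + (X \<omega> - m)) \<le> exp m * exp (X \<omega> - m)" by simp
    then show ?thesis by (simp add: algebra_simps exp_diff)
  qed
  have int2: "integrable M (\<lambda>\<omega>. exp m + exp m * (X \<omega> - m))" using iX by auto
  have "(\<integral>\<omega>. exp m + exp m * (X \<omega> - m) \<partial>M) \<le> (\<integral>\<omega>. exp (X \<omega>) \<partial>M)"
    by (rule integral_mono[OF int2 iE pw])
  moreover have "(\<integral>\<omega>. exp m + exp m * (X \<omega> - m) \<partial>M) = exp m"
    using iX by (simp add: integral_diff m_def prob_space)
  ultimately show ?thesis unfolding m_def by simp
qed

theorem theorem4p2:
  fixes M :: "'a measure" and b :: "'a \<Rightarrow> real"
    and q :: "'d \<Rightarrow> real" and d :: 'd and \<Delta>q :: real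
  assumes "prob_space M"
    and "b \<in> borel_measurable M"
    and "\<forall>\<omega>\<in>space M. b \<omega> > 0"
    and "\<Delta>q > 0"
    and "integrable M (\<lambda>\<omega>. exp (\<Delta>q / b \<omega>))"
    and "integrable M (\<lambda>\<omega>. 1 / b \<omega>)"
  shows "(\<forall>\<epsilon> \<gamma>. \<epsilon> \<ge> ln (mgf_inv M b \<Delta>q) \<and> \<gamma> \<ge> 0 \<longrightarrow>
            measure (r2dp_laplace M b (q d)) {y. \<bar>y - q d\<bar> \<le> \<gamma>} = 1 - mgf_inv M b (- \<gamma>)
          \<and> 1 - mgf_inv M b (- \<gamma>) \<le> 1 - exp (- \<gamma> * \<epsilon> / \<Delta>q))
       \<and> ((\<exists>\<gamma>\<ge>0. measure (r2dp_laplace M b (q d)) {y. \<bar>y - q d\<bar> \<le> \<gamma>}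
                 > 1 - exp (- \<gamma> * ln ((\<integral>\<omega>. 1 / b \<omega> \<partial>M) / mgf_inv' M b (- \<Delta>q)) / \<Delta>q))
          \<longrightarrow> (\<integral>\<omega>. 1 / b \<omega> \<partial>M) / mgf_inv' M b (- \<Delta>q) < mgf_inv M b \<Delta>q)"
proof -
  interpret P: prob_space M by (rule assms(1))
  have bm[measurable]: "b \<in> borel_measurable M" by (rule assms(2))
  define c where "c = q d"
  define m where "m = (\<integral>\<omega>. 1 / b \<omega> \<partial>M)"
  have K: "(\<lambda>\<omega>. laplace c (b \<omega>)) \<in> measurable M (subprob_algebra lborel)"
    by (rule laplace_kernel[OF assms(2,3)])
  have iexpg: "integrable M (\<lambda>\<omega>. exp (- \<gamma> / b \<omega>))" if g: "\<gamma> \<ge> 0" for \<gamma>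
  proof (rule P.integrable_const_bound[where B=1])
    show "AE x in M. norm (exp (- \<gamma> / b x)) \<le> 1"
      using assms(3) g by (auto intro!: AE_I2 simp: divide_nonneg_pos)
  qed simp
  have meas: "measure (r2dp_laplace M b c) {y. \<bar>y - c\<bar> \<le> \<gamma>} = 1 - mgf_inv M b (- \<gamma>)"
    if g: "\<gamma> \<ge> 0" for \<gamma>
  proof -
    have S: "{y. \<bar>y - c\<bar> \<le> \<gamma>} = {c - \<gamma>..c + \<gamma>}" by auto
    have "emeasure (r2dp_laplace M b c) {c - \<gamma>..c + \<gamma>} = (\<integral>\<^sup>+\<omega>. emeasure (laplace c (b \<omega>)) {c - \<gamma>..c + \<gamma>} \<partial>M)"
      unfolding r2dp_laplace_def by (rule emeasure_bind[OF P.not_empty K]) simp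
    also have "\<dots> = (\<integral>\<^sup>+\<omega>. ennreal (1 - exp (- \<gamma> / b \<omega>)) \<partial>M)"
      by (rule nn_integral_cong) (use assms(3) g lap_meas_interval in auto)
    also have "\<dots> = ennreal (\<integral>\<omega>. 1 - exp (- \<gamma> / b \<omega>) \<partial>M)"
    proof (rule nn_integral_eq_integral)
      show "integrable M (\<lambda>\<omega>. 1 - exp (- \<gamma> / b \<omega>))" using iexpg[OF g] by auto
      show "AE x in M. 0 \<le> 1 - exp (- \<gamma> / b x)"
        using assms(3) g by (auto intro!: AE_I2 simp: divide_nonneg_pos)
    qed
    also have "(\<integral>\<omega>. 1 - exp (- \<gamma> / b \<omega>) \<partial>M) = 1 - mgf_inv M b (- \<gamma>)"
      using iexpg[OF g] by (simp add: integral_diff mgf_inv_def P.prob_space)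
    finally have e: "emeasure (r2dp_laplace M b c) {c - \<gamma>..c + \<gamma>} = ennreal (1 - mgf_inv M b (- \<gamma>))" .
    have "mgf_inv M b (- \<gamma>) \<le> 1"
    proof -
      have "mgf_inv M b (- \<gamma>) \<le> (\<integral>\<omega>. 1 \<partial>M)"
        unfolding mgf_inv_def
        by (rule integral_mono[OF iexpg[OF g]]) (use assms(3) g in \<open>auto simp: divide_nonneg_pos\<close>)
      then show ?thesis by (simp add: P.prob_space)
    qed
    then show ?thesis unfolding S measure_def e by simp
  qed
  have lin: "(\<integral>\<omega>. t / b \<omega> \<partial>M) = t * m" and ilin: "integrable M (\<lambda>\<omega>. t / b \<omega>)" for t
  proof -
    have "(\<lambda>\<omega>. t / b \<omega>) = (\<lambda>\<omega>. t * (1 / b \<omega>))" by simp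
    then show "(\<integral>\<omega>. t / b \<omega> \<partial>M) = t * m" and "integrable M (\<lambda>\<omega>. t / b \<omega>)"
      using assms(6) unfolding m_def by (simp_all only: integral_mult_right_zero integrable_mult_right)
  qed
  have jen1: "exp (\<Delta>q * m) \<le> mgf_inv M b \<Delta>q"
    using exp_jensen[OF assms(1) ilin assms(5)] unfolding lin mgf_inv_def .
  have jen2: "exp (- \<gamma> * m) \<le> mgf_inv M b (- \<gamma>)" if g: "\<gamma> \<ge> 0" for \<gamma>
    using exp_jensen[OF assms(1) ilin iexpg[OF g]] unfolding lin mgf_inv_def .
  have main: "1 - mgf_inv M b (- \<gamma>) \<le> 1 - exp (- \<gamma> * \<epsilon> / \<Delta>q)"
    if e: "\<epsilon> \<ge> ln (mgf_inv M b \<Delta>q)" and g: "\<gamma> \<ge> 0" for \<epsilon> \<gamma>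
  proof -
    have "\<Delta>q * m \<le> ln (mgf_inv M b \<Delta>q)"
      using jen1 by (metis exp_gt_zero exp_le_cancel_iff exp_ln less_le_trans)
    then have "\<Delta>q * m \<le> \<epsilon>" using e by linarith
    then have "m \<le> \<epsilon> / \<Delta>q" using assms(4) by (simp add: field_simps)
    then have "- \<gamma> * \<epsilon> / \<Delta>q \<le> - \<gamma> * m" using g
      by (metis mult_left_mono mult_minus_left neg_le_iff_le times_divide_eq_right)
    then have "exp (- \<gamma> * \<epsilon> / \<Delta>q) \<le> exp (- \<gamma> * m)" by simp
    with jen2[OF g] show ?thesis by linarith
  qed
  have part1: "\<forall>\<epsilon> \<gamma>. \<epsilon> \<ge> ln (mgf_inv M b \<Delta>q) \<and> \<gamma> \<ge> 0 \<longrightarrow>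
            measure (r2dp_laplace M b (q d)) {y. \<bar>y - q d\<bar> \<le> \<gamma>} = 1 - mgf_inv M b (- \<gamma>)
          \<and> 1 - mgf_inv M b (- \<gamma>) \<le> 1 - exp (- \<gamma> * \<epsilon> / \<Delta>q)"
    using meas main unfolding c_def by blast
  have Mpos: "mgf_inv M b \<Delta>q > 0"
    using jen1 by (metis exp_gt_zero less_le_trans)
  have part2: "(\<integral>\<omega>. 1 / b \<omega> \<partial>M) / mgf_inv' M b (- \<Delta>q) < mgf_inv M b \<Delta>q"
    if ex: "\<exists>\<gamma>\<ge>0. measure (r2dp_laplace M b (q d)) {y. \<bar>y - q d\<bar> \<le> \<gamma>}
                 > 1 - exp (- \<gamma> * ln ((\<integral>\<omega>. 1 / b \<omega> \<partial>M) / mgf_inv' M b (- \<Delta>q)) / \<Delta>q)"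
  proof (rule ccontr)
    define R where "R = (\<integral>\<omega>. 1 / b \<omega> \<partial>M) / mgf_inv' M b (- \<Delta>q)"
    assume "\<not> ?thesis"
    then have "R \<ge> mgf_inv M b \<Delta>q" unfolding R_def by simp
    then have "ln R \<ge> ln (mgf_inv M b \<Delta>q)" using Mpos by simp
    then have "\<forall>\<gamma>\<ge>0. measure (r2dp_laplace M b (q d)) {y. \<bar>y - q d\<bar> \<le> \<gamma>} \<le> 1 - exp (- \<gamma> * ln R / \<Delta>q)"
      using part1 by auto
    then show False using ex unfolding R_def by force
  qed
  show ?thesis using part1 part2 by blast
qed

end
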